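(* Let $0\le s\le t\le T$, $\bar\omega\in\Omega$, $\xi\in UC_b(\Omega)$ and $\varepsilon>0$. Then there exist a sequence $(\hat\omega^i)_{i\ge1}$ in $\Omega^s$, an $\mathcal F^s_t$-measurable partition $(E^i)_{i\ge1}$ of $\Omega^s$ and a sequence $(P^i)_{i\ge1}$ in $\overline{\mathcal P}^t_S$ such that (i) $\|\omega-\hat\omega^i\|_{[s,t]}\le\varepsilon$ for all $\omega\in E^i$; (ii) $P^i\in\mathcal P(t,\bar\omega\otimes_s\omega)$ for all $\omega\in E^i$ and $\inf_{\omega\in E^i}\deg(t,\bar\omega\otimes_s\omega,P^i)>0$; (iii) $V_t(\xi)(\bar\omega\otimes_s\hat\omega^i)\le E^{P^i}[\xi^{t,\bar\omega\otimes_s\hat\omega^i}]+\varepsilon$.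
   Context: Fix $T>0$ and $d\ge1$. Let $\Omega=\{\omega\in C([0,T];\mathbb R^d):\omega_0=0\}$, $\|\omega\|_t:=\sup_{0\le s\le t}|\omega_s|$, $\|\omega\|_{[s,t]}:=\sup_{s\le u\le t}|\omega_u|$. For $t\in[0,T]$ let $\Omega^t=\{\omega\in C([t,T];\mathbb R^d):\omega_t=0\}$ with canonical process $B^t$, Wiener measure $P^t_0$ and raw filtration $\mathbb F^t=(\mathcal F^t_u)_{t\le u\le T}$ ($\Omega^0=\Omega$). For $0\le s\le t\le T$, $\omega\in\Omega^s$, $\tilde\omega\in\Omega^t$: $(\omega\otimes_t\tilde\omega)_u:=\omega_u\mathbf 1_{[s,t)}(u)+(\omega_t+\tilde\omega_u)\mathbf 1_{[t,T]}(u)$, $s\le u\le T$; for a function $\xi$ on $\Omega^s$, $\xi^{t,\omega}(\tilde\omega):=\xi(\omega\otimes_t\tilde\omega)$. $\hat a^t_u:=\limsup_{n}n(\langle B^t\rangle_u-\langle B^t\rangle_{u-1/n})$ with $\langle B^t\rangle$ the pathwise quadratic variation. $\mathbb S^+_d$ ($\mathbb S^{>0}_d$): positive semidefinite (strictly positive definite) symmetric matrices. $\overline{\mathcal P}^t_S$ is the set of laws $P^\alpha:=P^t_0\circ(X^\alpha)^{-1}$, $X^\alpha_u:=\int_t^u\alpha_r^{1/2}\,dB^t_r$ (Itô integral under $P^t_0$), $\alpha$ ranging over $\mathbb F^t$-progressively measurable $\mathbb S^{>0}_d$-valued processes with $\int_t^T|\alpha_r|dr<\infty$ $P^t_0$-a.s.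 $\mathbf D:\Omega\times[0,T]\to2^{\mathbb S^+_d}$ is a progressively measurable closed-set-valued process; $\mathrm{Int}^\delta D:=\{x\in D:B_\delta(x)\subseteq D\}$; $\mathbf D^{t,\omega}_u(\tilde\omega):=\mathbf D_u(\omega\otimes_t\tilde\omega)$. For $(t,\omega)\in[0,T]\times\Omega$, $\mathcal P(t,\omega)$ is the set of $P\in\overline{\mathcal P}^t_S$ for which there is $\delta>0$ with $\hat a^t_u(\tilde\omega)\in\mathrm{Int}^\delta\mathbf D^{t,\omega}_u(\tilde\omega)$ for $du\times P$-a.e. $(u,\tilde\omega)\in[t,T]\times\Omega^t$; with $\delta^*$ the supremum of such $\delta$, $\deg(t,\omega,P):=(\delta^*/2)\wedge1$. Standing assumption: $\mathbf D$ is uniformly continuous, i.e. for all $\delta>0$ and $(t,\omega)$ there is $\varepsilon>0$ such that $\|\omega-\omega'\|_t\le\varepsilon$ implies $\mathrm{Int}^\delta\mathbf D^{t,\omega}_u(\tilde\omega)\subseteq\mathrm{Int}^\varepsilon\mathbf D^{t,\omega'}_u(\tilde\omega)$ for all $(u,\tilde\omega)\in[t,T]\times\Omega^t$; and $\mathcal P(t,\omega)\neq\emptyset$ for all $(t,\omega)$. $UC_b(\Omega)$: bounded $\|\cdot\|_T$-uniformly continuous functions on $\Omega$. $V_t(\xi)(\omega):=\sup_{P\in\mathcal P(t,\omega)}E^P[\xi^{t,\omega}]$. *)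

theory Defs
  imports "HOL-Probability.Probability"
begin

type_synonym 'd path = "real \<Rightarrow> real^'d"
type_synonym 'd mat = "real^'d^'d"

definition Omega :: "real \<Rightarrow> real \<Rightarrow> ('d::finite) path set" where
  "Omega T t = {\<omega>. continuous_on {t..T} \<omega> \<and> \<omega> t = 0 \<and> (\<forall>u. u \<notin> {t..T} \<longrightarrow> \<omega> u = 0)}"

definition Ft :: "real \<Rightarrow> real \<Rightarrow> real \<Rightarrow> ('d::finite) path set set" where
  "Ft T t u = sigma_sets (Omega T t)
     {{\<omega> \<in> Omega T t. \<omega> r \<in> A} | r A. r \<in> {t..u} \<and> A \<in> sets (borel :: (real^'d) measure)}"

definition FM :: "real \<Rightarrow> real \<Rightarrow> real \<Rightarrow> ('d::finite) path measure" where
  "FM T t u = measure_of (Omega T t) (Ft T t u) (\<lambda>_. 0)"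

definition is_wiener :: "real \<Rightarrow> real \<Rightarrow> ('d::finite) path measure \<Rightarrow> bool" where
  "is_wiener T t P \<longleftrightarrow> prob_space P \<and> space P = Omega T t \<and> sets P = Ft T t T \<and>
    (\<forall>(n::nat) (r::nat \<Rightarrow> real). (\<forall>k\<le>n. r k \<in> {t..T}) \<and> (\<forall>k<n. r k < r (Suc k)) \<longrightarrow>
       prob_space.indep_vars P (\<lambda>_. borel)
          (\<lambda>(k, i) \<omega>. \<omega> (r (Suc k)) $ i - \<omega> (r k) $ i) ({..<n} \<times> (UNIV :: 'd set)) \<and>
       (\<forall>k<n. \<forall>i::'d. distributed P lborel (\<lambda>\<omega>. \<omega> (r (Suc k)) $ i - \<omega> (r k) $ i)
                         (normal_density 0 (sqrt (r (Suc k) - r k)))))"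

definition wiener :: "real \<Rightarrow> real \<Rightarrow> ('d::finite) path measure" where
  "wiener T t = (THE P. is_wiener T t P)"

definition psd :: "('d::finite) mat \<Rightarrow> bool" where
  "psd A \<longleftrightarrow> transpose A = A \<and> (\<forall>x. 0 \<le> x \<bullet> (A *v x))"

definition posdef :: "('d::finite) mat \<Rightarrow> bool" where
  "posdef A \<longleftrightarrow> transpose A = A \<and> (\<forall>x. x \<noteq> 0 \<longrightarrow> 0 < x \<bullet> (A *v x))"

definition msqrt :: "('d::finite) mat \<Rightarrow> 'd mat" where
  "msqrt A = (THE S. psd S \<and> S ** S = A)"

definition outer :: "real^'d \<Rightarrow> real^'d \<Rightarrow> ('d::finite) mat" where
  "outer x y = (\<chi> i j. x $ i * y $ j)"

definition progressive :: "real \<Rightarrow> real \<Rightarrow> (('d::finite) path \<Rightarrow> real \<Rightarrow> 'b::topological_space) \<Rightarrow> bool" where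
  "progressive T t H \<longleftrightarrow> (\<forall>u\<in>{t..T}.
     (\<lambda>(r, \<omega>). H \<omega> r) \<in> borel_measurable (restrict_space lborel {t..u} \<Otimes>\<^sub>M FM T t u))"

definition step_proc :: "nat \<Rightarrow> (nat \<Rightarrow> real) \<Rightarrow> (nat \<Rightarrow> ('d::finite) path \<Rightarrow> 'd mat) \<Rightarrow> 'd path \<Rightarrow> real \<Rightarrow> 'd mat" where
  "step_proc n r h \<omega> u = (\<Sum>k<n. if r k < u \<and> u \<le> r (Suc k) then h k \<omega> else 0)"

definition step_int :: "nat \<Rightarrow> (nat \<Rightarrow> real) \<Rightarrow> (nat \<Rightarrow> ('d::finite) path \<Rightarrow> 'd mat) \<Rightarrow> 'd path \<Rightarrow> real \<Rightarrow> real^'d" where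
  "step_int n r h \<omega> u = (\<Sum>k<n. h k \<omega> *v (\<omega> (min u (r (Suc k))) - \<omega> (min u (r k))))"

definition simple_data :: "real \<Rightarrow> real \<Rightarrow> nat \<Rightarrow> (nat \<Rightarrow> real) \<Rightarrow> (nat \<Rightarrow> ('d::finite) path \<Rightarrow> 'd mat) \<Rightarrow> bool" where
  "simple_data T t n r h \<longleftrightarrow> r 0 = t \<and> r n = T \<and> (\<forall>k<n. r k < r (Suc k)) \<and>
     (\<forall>k<n. h k \<in> borel_measurable (FM T t (r k)) \<and> (\<exists>C. \<forall>\<omega>\<in>Omega T t. norm (h k \<omega>) \<le> C))"

(* X is (a version of) the Ito integral  int_t^. H dB^t  under P^t_0: a continuous adapted process that is
   the ucp-limit of elementary integrals of step processes approximating H in probability in L^2(dr) *)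
definition is_ito_integral :: "real \<Rightarrow> real \<Rightarrow> (('d::finite) path \<Rightarrow> real \<Rightarrow> 'd mat) \<Rightarrow> ('d path \<Rightarrow> 'd path) \<Rightarrow> bool" where
  "is_ito_integral T t H X \<longleftrightarrow>
     (\<forall>\<omega>\<in>Omega T t. X \<omega> \<in> Omega T t) \<and>
     X \<in> FM T t T \<rightarrow>\<^sub>M FM T t T \<and>
     (\<forall>u\<in>{t..T}. (\<lambda>\<omega>. X \<omega> u) \<in> borel_measurable (FM T t u)) \<and>
     (\<exists>n r h. (\<forall>m. simple_data T t (n m) (r m) (h m)) \<and>
        (\<forall>e>0. (\<lambda>m. measure (wiener T t)
            {\<omega> \<in> Omega T t. (LINT v:{t..T}|lborel. (norm (step_proc (n m) (r m) (h m) \<omega> v - H \<omega> v))\<^sup>2) > e})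
          \<longlonglongrightarrow> 0) \<and>
        (\<forall>e>0. (\<lambda>m. measure (wiener T t)
            {\<omega> \<in> Omega T t. \<exists>v\<in>{t..T}. norm (X \<omega> v - step_int (n m) (r m) (h m) \<omega> v) > e})
          \<longlonglongrightarrow> 0))"

definition PbarS :: "real \<Rightarrow> real \<Rightarrow> ('d::finite) path measure set" where
  "PbarS T t = {distr (wiener T t) (FM T t T) X | \<alpha> X.
     progressive T t \<alpha> \<and> (\<forall>\<omega>\<in>Omega T t. \<forall>v\<in>{t..T}. posdef (\<alpha> \<omega> v)) \<and>
     (AE \<omega> in wiener T t. set_integrable lborel {t..T} (\<lambda>v. norm (\<alpha> \<omega> v))) \<and>
     is_ito_integral T t (\<lambda>\<omega> v. msqrt (\<alpha> \<omega> v)) X}"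

(* pathwise quadratic variation (Karandikar): partitions by the stopping times tau^n_k *)
primrec ktau :: "real \<Rightarrow> real \<Rightarrow> nat \<Rightarrow> ('d::finite) path \<Rightarrow> nat \<Rightarrow> real" where
  "ktau T t n \<omega> 0 = t"
| "ktau T t n \<omega> (Suc k) =
     (let a = ktau T t n \<omega> k; S = {u \<in> {a..T}. norm (\<omega> u - \<omega> a) \<ge> 1 / 2 ^ n}
      in if S = {} then T else Inf S)"

definition qv_sum :: "real \<Rightarrow> real \<Rightarrow> nat \<Rightarrow> ('d::finite) path \<Rightarrow> real \<Rightarrow> 'd mat" where
  "qv_sum T t n \<omega> u = (\<Sum>k. outer (\<omega> (min u (ktau T t n \<omega> (Suc k))) - \<omega> (min u (ktau T t n \<omega> k)))
                                 (\<omega> (min u (ktau T t n \<omega> (Suc k))) - \<omega> (min u (ktau T t n \<omega> k))))"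

definition qv :: "real \<Rightarrow> real \<Rightarrow> ('d::finite) path \<Rightarrow> real \<Rightarrow> 'd mat" where
  "qv T t \<omega> u = (if uniformly_convergent_on {t..T} (\<lambda>n. qv_sum T t n \<omega>) \<and> u \<in> {t..T}
                  then lim (\<lambda>n. qv_sum T t n \<omega> u) else 0)"

(* \<hat>a^t_u = limsup_n n(<B^t>_u - <B^t>_{u-1/n}), entrywise (infinite entries mapped to 0 by real_of_ereal) *)
definition hat_a :: "real \<Rightarrow> real \<Rightarrow> ('d::finite) path \<Rightarrow> real \<Rightarrow> 'd mat" where
  "hat_a T t \<omega> u = (\<chi> i j. real_of_ereal (limsup (\<lambda>n::nat.
      ereal (real n * (qv T t \<omega> u $ i $ j - qv T t \<omega> (u - 1 / real n) $ i $ j)))))"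

definition IntD :: "real \<Rightarrow> ('d::finite) mat set \<Rightarrow> 'd mat set" where
  "IntD \<delta> S = {x \<in> S. {y. transpose y = y \<and> dist x y < \<delta>} \<subseteq> S}"

definition concat :: "real \<Rightarrow> real \<Rightarrow> ('d::finite) path \<Rightarrow> 'd path \<Rightarrow> 'd path" where
  "concat T t \<omega> \<omega>' = (\<lambda>u. if u < t then \<omega> u else if u \<le> T then \<omega> t + \<omega>' u else 0)"

definition Pgood :: "real \<Rightarrow> (('d::finite) path \<Rightarrow> real \<Rightarrow> 'd mat set) \<Rightarrow> real \<Rightarrow> 'd path \<Rightarrow> 'd path measure \<Rightarrow> real \<Rightarrow> bool" where
  "Pgood T D t \<omega> P \<delta> \<longleftrightarrow> (AE (u, \<omega>') in (restrict_space lborel {t..T} \<Otimes>\<^sub>M P).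
      hat_a T t \<omega>' u \<in> IntD \<delta> (D (concat T t \<omega> \<omega>') u))"

definition Pset :: "real \<Rightarrow> (('d::finite) path \<Rightarrow> real \<Rightarrow> 'd mat set) \<Rightarrow> real \<Rightarrow> 'd path \<Rightarrow> 'd path measure set" where
  "Pset T D t \<omega> = {P \<in> PbarS T t. \<exists>\<delta>>0. Pgood T D t \<omega> P \<delta>}"

(* deg(t,\<omega>,P) = (\<delta>*/2) \<and> 1, \<delta>* possibly +\<infinity> *)
definition deg :: "real \<Rightarrow> (('d::finite) path \<Rightarrow> real \<Rightarrow> 'd mat set) \<Rightarrow> real \<Rightarrow> 'd path \<Rightarrow> 'd path measure \<Rightarrow> real" where
  "deg T D t \<omega> P = real_of_ereal (min (Sup {ereal \<delta> | \<delta>. \<delta> > 0 \<and> Pgood T D t \<omega> P \<delta>} / 2) 1)"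

definition Vt :: "real \<Rightarrow> (('d::finite) path \<Rightarrow> real \<Rightarrow> 'd mat set) \<Rightarrow> ('d path \<Rightarrow> real) \<Rightarrow> real \<Rightarrow> 'd path \<Rightarrow> real" where
  "Vt T D \<xi> t \<omega> = (SUP P \<in> Pset T D t \<omega>. integral\<^sup>L P (\<lambda>\<omega>'. \<xi> (concat T t \<omega> \<omega>')))"

definition UCb :: "real \<Rightarrow> (('d::finite) path \<Rightarrow> real) set" where
  "UCb T = {\<xi>. (\<exists>C. \<forall>\<omega>\<in>Omega T 0. \<bar>\<xi> \<omega>\<bar> \<le> C) \<and>
     (\<forall>e>0. \<exists>\<delta>>0. \<forall>\<omega>\<in>Omega T 0. \<forall>\<omega>'\<in>Omega T 0.
        (\<forall>u\<in>{0..T}. norm (\<omega> u - \<omega>' u) \<le> \<delta>) \<longrightarrow> \<bar>\<xi> \<omega> - \<xi> \<omega>'\<bar> \<le> e)}"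

definition D_progressive :: "real \<Rightarrow> (('d::finite) path \<Rightarrow> real \<Rightarrow> 'd mat set) \<Rightarrow> bool" where
  "D_progressive T D \<longleftrightarrow> (\<forall>r\<in>{0..T}. \<forall>G. open G \<longrightarrow>
     {(u, \<omega>) \<in> {0..r} \<times> Omega T 0. D \<omega> u \<inter> G \<noteq> {}} \<in> sets (restrict_space lborel {0..r} \<Otimes>\<^sub>M FM T 0 r))"

definition D_closed_psd :: "real \<Rightarrow> (('d::finite) path \<Rightarrow> real \<Rightarrow> 'd mat set) \<Rightarrow> bool" where
  "D_closed_psd T D \<longleftrightarrow> (\<forall>\<omega>\<in>Omega T 0. \<forall>u\<in>{0..T}. closed (D \<omega> u) \<and> D \<omega> u \<subseteq> {A. psd A})"

definition D_unif_cont :: "real \<Rightarrow> (('d::finite) path \<Rightarrow> real \<Rightarrow> 'd mat set) \<Rightarrow> bool" where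
  "D_unif_cont T D \<longleftrightarrow> (\<forall>\<delta>>0. \<forall>t\<in>{0..T}. \<forall>\<omega>\<in>Omega T 0. \<exists>\<epsilon>>0. \<forall>\<omega>'\<in>Omega T 0.
     (\<forall>u\<in>{0..t}. norm (\<omega> u - \<omega>' u) \<le> \<epsilon>) \<longrightarrow>
     (\<forall>u\<in>{t..T}. \<forall>\<omega>''\<in>Omega T t.
        IntD \<delta> (D (concat T t \<omega> \<omega>'') u) \<subseteq> IntD \<epsilon> (D (concat T t \<omega>' \<omega>'') u)))"

end

theory Submission
  imports Defs
begin

definition S0 :: "real \<Rightarrow> real \<Rightarrow> real set" where
  "S0 s t = {s,t} \<union> (\<rat> \<inter> {s<..<t})"

lemma ext_S0:
  fixes f :: "real \<Rightarrow> 'a::real_normed_vector"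
  assumes "continuous_on {s..t} f" "\<forall>u\<in>S0 s t. norm (f u) \<le> c" "u \<in> {s..t}"
  shows "norm (f u) \<le> c"
proof (rule continuous_on_closure_norm_le[of "S0 s t"])
  have "closure (S0 s t) \<subseteq> {s..t}"
    using assms(3) by (intro closure_minimal) (auto simp: S0_def)
  then show "continuous_on (closure (S0 s t)) f" using assms(1) continuous_on_subset by blast
  show "\<forall>y\<in>S0 s t. norm (f y) \<le> c" using assms(2) .
  show "u \<in> closure (S0 s t)"
  proof (cases "u = s \<or> u = t")
    case True then show ?thesis by (auto simp: S0_def intro: closure_subset[THEN subsetD])
  next
    case False
    with assms(3) have u: "s < u" "u < t" by auto
    show ?thesis unfolding closure_approachable
    proof (intro allI impI)
      fix e :: real assume "e > 0"
      obtain r where r: "r \<in> \<rat>" "max s (u - e) < r" "r < u"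
        using Rats_dense_in_real[of "max s (u-e)" u] u \<open>e>0\<close> by auto
      then have "r \<in> S0 s t" using u by (auto simp: S0_def)
      moreover have "dist r u < e" using r by (auto simp: dist_real_def)
      ultimately show "\<exists>y\<in>S0 s t. dist y u < e" by blast
    qed
  qed
qed

lemma countable_S0: "countable (S0 s t)"
  unfolding S0_def by (auto intro: countable_rat countable_Int1)

lemma meas_ball:
  assumes "s \<le> t"
  shows "{\<omega>\<in>Omega T s. \<forall>u\<in>S0 s t. norm (\<omega> u - q u) \<le> c} \<in> Ft T s t"
proof -
  define f where "f = from_nat_into (S0 s t)"
  have ne: "S0 s t \<noteq> {}" by (auto simp: S0_def)
  have rf: "range f = S0 s t" unfolding f_def using ne countable_S0 by simp
  define G where "G u = {\<omega>\<in>Omega T s. \<omega> u \<in> cball (q u) c}" for u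
  have eq: "{\<omega>\<in>Omega T s. \<forall>u\<in>S0 s t. norm (\<omega> u - q u) \<le> c} = (\<Inter>i. G (f i))"
    using ne rf by (auto simp: G_def dist_norm norm_minus_commute) (metis rangeE)
  have "G (f i) \<in> Ft T s t" for i
  proof -
    have "f i \<in> S0 s t" using rf by auto
    then have "f i \<in> {s..t}" using assms by (auto simp: S0_def)
    then show ?thesis unfolding Ft_def G_def
      by (intro sigma_sets.Basic CollectI exI[of _ "f i"] exI[of _ "cball (q (f i)) c"] conjI refl)
        (auto intro!: borel_closed simp del: mem_cball)
  qed
  then have "(\<Inter>i. G (f i)) \<in> Ft T s t" unfolding Ft_def
    by (intro sigma_sets_Inter) auto
  then show ?thesis using eq by simp
qed

lemma concat_in:
  assumes "\<omega>b \<in> Omega T 0" "\<omega> \<in> Omega T s" "0 \<le> s" "s \<le> T"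
  shows "concat T s \<omega>b \<omega> \<in> Omega T 0"
proof -
  have c1: "continuous_on {0..T} \<omega>b" "continuous_on {s..T} \<omega>" and z: "\<omega> s = 0"
    and z0: "\<forall>u. u \<notin> {0..T} \<longrightarrow> \<omega>b u = 0"
    using assms by (auto simp: Omega_def)
  have eq: "\<forall>u\<in>{0..T}. concat T s \<omega>b \<omega> u = (if u \<le> s then \<omega>b u else \<omega>b s + \<omega> u)"
    using z by (auto simp: concat_def)
  have "continuous_on {0..T} (\<lambda>u. if u \<le> s then \<omega>b u else \<omega>b s + \<omega> u)"
  proof (rule continuous_on_cases_le)
    show "continuous_on {u \<in> {0..T}. u \<le> s} \<omega>b" by (rule continuous_on_subset[OF c1(1)]) auto
    show "continuous_on {u \<in> {0..T}. s \<le> u} (\<lambda>u. \<omega>b s + \<omega> u)"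
      by (intro continuous_intros continuous_on_subset[OF c1(2)]) auto
  qed (use z in auto)
  then have "continuous_on {0..T} (concat T s \<omega>b \<omega>)"
    by (rule continuous_on_eq) (use eq in auto)
  moreover have "concat T s \<omega>b \<omega> 0 = 0" using assms z by (auto simp: concat_def Omega_def)
  moreover have "\<forall>u. u \<notin> {0..T} \<longrightarrow> concat T s \<omega>b \<omega> u = 0" using z0 assms
    by (auto simp: concat_def)
  ultimately show ?thesis by (simp add: Omega_def)
qed

lemma space_PbarS: "P \<in> PbarS T t \<Longrightarrow> space P = Omega T t"
  by (auto simp: PbarS_def FM_def space_measure_of_conv)

lemma pgood_transfer:
  assumes "P \<in> PbarS T t" "Pgood T D t w1 P \<delta>"
    "\<forall>u\<in>{t..T}. \<forall>w''\<in>Omega T t. IntD \<delta> (D (concat T t w1 w'') u) \<subseteq> IntD e (D (concat T t w2 w'') u)"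
  shows "Pgood T D t w2 P e"
proof -
  let ?M = "restrict_space lborel {t..T} \<Otimes>\<^sub>M P"
  have sp: "space ?M = {t..T} \<times> Omega T t"
    using space_PbarS[OF assms(1)] by (simp add: space_pair_measure)
  have "AE x in ?M. x \<in> space ?M" by (rule AE_space)
  moreover have "AE x in ?M. case x of (u, w') \<Rightarrow> hat_a T t w' u \<in> IntD \<delta> (D (concat T t w1 w') u)"
    using assms(2) by (simp add: Pgood_def)
  ultimately have "AE x in ?M. case x of (u, w') \<Rightarrow> hat_a T t w' u \<in> IntD e (D (concat T t w2 w') u)"
    by eventually_elim (use assms(3) sp in auto)
  then show ?thesis by (simp add: Pgood_def)
qed

lemma deg_lb:
  assumes "\<delta> > 0" "Pgood T D t w P \<delta>"
  shows "min (\<delta>/2) 1 \<le> deg T D t w P"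
proof -
  define S where "S = {ereal \<delta> | \<delta>. \<delta> > 0 \<and> Pgood T D t w P \<delta>}"
  have "ereal \<delta> \<le> Sup S" unfolding S_def using assms by (intro Sup_upper) auto
  have dg: "deg T D t w P = real_of_ereal (min (Sup S / 2) 1)" by (simp add: deg_def S_def)
  show ?thesis
  proof (cases "Sup S")
    case (real r)
    with \<open>ereal \<delta> \<le> Sup S\<close> have "\<delta> \<le> r" by simp
    then show ?thesis using real dg by (simp add: min_def)
  next
    case PInf then show ?thesis using dg by simp
  next
    case MInf then show ?thesis using \<open>ereal \<delta> \<le> Sup S\<close> dg by simp
  qed
qed

lemma Vt_approx:
  assumes "Pset T D t w \<noteq> {}" "\<epsilon> > 0"
  shows "\<exists>P\<in>Pset T D t w. Vt T D \<xi> t w \<le> integral\<^sup>L P (\<lambda>\<omega>'. \<xi> (concat T t w \<omega>')) + \<epsilon>"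
proof -
  define Y where "Y = (\<lambda>P. integral\<^sup>L P (\<lambda>\<omega>'. \<xi> (concat T t w \<omega>'))) ` Pset T D t w"
  have V: "Vt T D \<xi> t w = Sup Y" by (simp add: Vt_def Y_def)
  have "Y \<noteq> {}" using assms by (simp add: Y_def)
  have "\<exists>y\<in>Y. Sup Y \<le> y + \<epsilon>"
  proof (cases "bdd_above Y")
    case True
    have "Sup Y - \<epsilon> < Sup Y" using assms by simp
    then obtain y where "y \<in> Y" "Sup Y - \<epsilon> < y" using less_cSup_iff[OF \<open>Y \<noteq> {}\<close> True] by blast
    then show ?thesis by force
  next
    case False
    then obtain y where "y \<in> Y" "Sup Y < y" unfolding bdd_above_def by (meson not_le)
    then show ?thesis using assms by force
  qed
  then show ?thesis unfolding V Y_def by auto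
qed


lemma sep_Q:
  fixes s t :: real
  assumes "s \<le> t"
  obtains Q :: "(real \<Rightarrow> 'a::euclidean_space) set" where "countable Q"
    "\<And>\<omega> e. continuous_on {s..t} \<omega> \<Longrightarrow> e > 0 \<Longrightarrow> \<exists>q\<in>Q. \<forall>u\<in>{s..t}. norm (\<omega> u - q u) < e"
proof -
  obtain Dv :: "'a set" where Dv: "countable Dv" "\<And>X. open X \<Longrightarrow> X \<noteq> {} \<Longrightarrow> \<exists>d\<in>Dv. d \<in> X"
    using countable_dense_setE by blast
  define idx where "idx n u = nat \<lfloor>real n * (u - s) / (t - s)\<rfloor>" for n :: nat and u
  define Q where "Q = (\<lambda>(n, vs) u. (vs::'a list) ! idx n u) ` (UNIV \<times> lists Dv)"
  have cQ: "countable Q" unfolding Q_def using Dv(1) by (intro countable_image countable_SIGMA) auto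
  have dQ: "\<exists>q\<in>Q. \<forall>u\<in>{s..t}. norm (\<omega> u - q u) < e" if "continuous_on {s..t} \<omega>" "e>0" for \<omega> e
  proof -
    have "uniformly_continuous_on {s..t} \<omega>" using that(1) compact_uniformly_continuous by blast
    obtain d where d: "d > 0" "\<And>x x'. x\<in>{s..t} \<Longrightarrow> x'\<in>{s..t} \<Longrightarrow> dist x' x < d \<Longrightarrow> dist (\<omega> x') (\<omega> x) < e/2"
    proof -
      have "e/2 > 0" using \<open>e>0\<close> by simp
      then show ?thesis using that \<open>uniformly_continuous_on {s..t} \<omega>\<close>
        unfolding uniformly_continuous_on_def by metis
    qed
    obtain m :: nat where m: "(t - s)/d < real m" using reals_Archimedean2 by blast
    define n where "n = Suc m"
    have npos: "real n > 0" by (simp add: n_def)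
    have "t - s < real m * d" using m d(1) by (simp add: field_simps)
    also have "\<dots> \<le> real n * d" using d(1) by (simp add: n_def)
    finally have n: "(t-s)/real n < d" using npos by (simp add: field_simps)
    define g where "g k = s + real k * (t-s)/real n" for k :: nat
    have "\<exists>v\<in>Dv. norm (\<omega> (g k) - v) < e/2" for k
    proof -
      obtain v where "v \<in> Dv" "v \<in> ball (\<omega> (g k)) (e/2)" using Dv(2)[of "ball (\<omega> (g k)) (e/2)"] \<open>e>0\<close> by auto
      then show ?thesis by (auto simp: dist_norm)
    qed
    then obtain vf where vf: "\<And>k. vf k \<in> Dv" "\<And>k. norm (\<omega> (g k) - vf k) < e/2" by metis
    define vs where "vs = map vf [0..<Suc n]"
    have "vs \<in> lists Dv" using vf by (auto simp: vs_def)
    then have qin: "(\<lambda>u. vs ! idx n u) \<in> Q" unfolding Q_def by force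
    have "norm (\<omega> u - vs ! idx n u) < e" if u: "u \<in> {s..t}" for u
    proof -
      let ?k = "idx n u"
      have k: "?k \<le> n \<and> g ?k \<in> {s..t} \<and> dist (g ?k) u < d"
      proof (cases "s = t")
        case True then have "?k = 0" unfolding idx_def by simp
        then show ?thesis using u True d by (auto simp: g_def)
      next
        case False then have st: "s < t" using assms by simp
        define x where "x = real n * (u - s)/(t - s)"
        have x0: "0 \<le> x" using u st npos by (auto simp: x_def)
        have "x \<le> real n" using u st npos by (auto simp: x_def field_simps)
        have kx: "real ?k = of_int \<lfloor>x\<rfloor>" using x0 by (simp add: idx_def x_def[symmetric])
        have k1: "real ?k \<le> x" "x < real ?k + 1" using kx by linarith+
        have kn: "?k \<le> n" using k1 \<open>x \<le> real n\<close> by linarith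
        have ux: "u - s = x * (t - s) / real n" using npos st by (simp add: x_def field_simps)
        have "g ?k \<le> u"
        proof -
          have "real ?k * (t-s)/real n \<le> x * (t-s)/real n"
            using k1 st npos by (intro divide_right_mono mult_right_mono) auto
          then show ?thesis using ux by (simp add: g_def)
        qed
        moreover have "g ?k \<ge> s" using st npos by (simp add: g_def)
        moreover have "u - g ?k < d"
        proof -
          have "u - g ?k = x * (t - s) / real n - real ?k * (t - s) / real n"
            using ux by (simp add: g_def algebra_simps)
          also have "\<dots> = (x - real ?k) * (t - s) / real n"
            by (simp add: left_diff_distrib diff_divide_distrib)
          also have "\<dots> < 1 * (t - s) / real n"
            using k1 st npos by (intro divide_strict_right_mono mult_strict_right_mono) auto
          finally show ?thesis using n by simp
        qed
        ultimately show ?thesis using kn u by (auto simp: dist_real_def)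
      qed
      have vk: "vs ! ?k = vf ?k" using k by (simp add: vs_def del: upt_Suc)
      have "norm (\<omega> u - \<omega> (g ?k)) < e/2" using d(2)[of "g ?k" u] k u by (simp add: dist_norm abs_minus_commute)
      moreover have "norm (\<omega> u - vs ! ?k) \<le> norm (\<omega> u - \<omega> (g ?k)) + norm (\<omega> (g ?k) - vs ! ?k)"
        using norm_triangle_ineq[of "\<omega> u - \<omega> (g ?k)" "\<omega> (g ?k) - vs ! ?k"] by simp
      ultimately show ?thesis using vf(2)[of ?k] vk by simp
    qed
    then show ?thesis using qin by (intro bexI[of _ "\<lambda>u. vs ! idx n u"]) auto
  qed
  show ?thesis by (rule that[OF cQ dQ])
qed


theorem lemma4p3:
  fixes T s t \<epsilon> :: real
    and D :: "('d::finite) path \<Rightarrow> real \<Rightarrow> 'd mat set"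
    and \<xi> :: "'d path \<Rightarrow> real"
    and \<omega>bar :: "'d path"
  assumes "T > 0"
    and "D_progressive T D" and "D_closed_psd T D" and "D_unif_cont T D"
    and "\<forall>t\<in>{0..T}. \<forall>\<omega>\<in>Omega T 0. Pset T D t \<omega> \<noteq> {}"
    and "0 \<le> s" and "s \<le> t" and "t \<le> T"
    and "\<omega>bar \<in> Omega T 0" and "\<xi> \<in> UCb T" and "\<epsilon> > 0"
  shows "\<exists>(\<omega>hat :: nat \<Rightarrow> 'd path) (E :: nat \<Rightarrow> 'd path set) (P :: nat \<Rightarrow> 'd path measure).
     (\<forall>i. \<omega>hat i \<in> Omega T s) \<and>
     (\<forall>i. E i \<in> Ft T s t) \<and> disjoint_family E \<and> (\<Union>i. E i) = Omega T s \<and>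
     (\<forall>i. P i \<in> PbarS T t) \<and>
     (\<forall>i. \<forall>\<omega>\<in>E i. \<forall>u\<in>{s..t}. norm (\<omega> u - \<omega>hat i u) \<le> \<epsilon>) \<and>
     (\<forall>i. (\<forall>\<omega>\<in>E i. P i \<in> Pset T D t (concat T s \<omega>bar \<omega>)) \<and>
          (\<exists>c>0. \<forall>\<omega>\<in>E i. c \<le> deg T D t (concat T s \<omega>bar \<omega>) (P i))) \<and>
     (\<forall>i. Vt T D \<xi> t (concat T s \<omega>bar (\<omega>hat i))
            \<le> integral\<^sup>L (P i) (\<lambda>\<omega>'. \<xi> (concat T t (concat T s \<omega>bar (\<omega>hat i)) \<omega>')) + \<epsilon>)"
proof -
  let ?X = "Omega T s :: 'd path set"
  let ?c = "\<lambda>\<omega>. concat T s \<omega>bar \<omega>"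
  have sT: "s \<le> T" using assms by simp
  have cin: "?c \<omega> \<in> Omega T 0" if "\<omega> \<in> ?X" for \<omega>
    using concat_in[OF assms(9) that assms(6) sT] .
  have t0T: "t \<in> {0..T}" using assms by auto
  have ex: "\<exists>P \<delta> e. P \<in> Pset T D t (?c \<omega>) \<and>
      Vt T D \<xi> t (?c \<omega>) \<le> integral\<^sup>L P (\<lambda>\<omega>'. \<xi> (concat T t (?c \<omega>) \<omega>')) + \<epsilon> \<and>
      \<delta> > 0 \<and> Pgood T D t (?c \<omega>) P \<delta> \<and> e > 0 \<and>
      (\<forall>\<omega>'\<in>Omega T 0. (\<forall>u\<in>{0..t}. norm (?c \<omega> u - \<omega>' u) \<le> e) \<longrightarrow>
        (\<forall>u\<in>{t..T}. \<forall>\<omega>''\<in>Omega T t.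
          IntD \<delta> (D (concat T t (?c \<omega>) \<omega>'') u) \<subseteq> IntD e (D (concat T t \<omega>' \<omega>'') u)))"
    if \<omega>: "\<omega> \<in> ?X" for \<omega>
  proof -
    have ne: "Pset T D t (?c \<omega>) \<noteq> {}" using assms(5) t0T cin[OF \<omega>] by blast
    obtain P where P: "P \<in> Pset T D t (?c \<omega>)"
      "Vt T D \<xi> t (?c \<omega>) \<le> integral\<^sup>L P (\<lambda>\<omega>'. \<xi> (concat T t (?c \<omega>) \<omega>')) + \<epsilon>"
      using Vt_approx[OF ne assms(11)] by blast
    then obtain \<delta> where \<delta>: "\<delta> > 0" "Pgood T D t (?c \<omega>) P \<delta>" by (auto simp: Pset_def)
    from assms(4)[unfolded D_unif_cont_def, rule_format, OF \<delta>(1) t0T cin[OF \<omega>]]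
    obtain e where "e > 0" "\<forall>\<omega>'\<in>Omega T 0. (\<forall>u\<in>{0..t}. norm (?c \<omega> u - \<omega>' u) \<le> e) \<longrightarrow>
        (\<forall>u\<in>{t..T}. \<forall>\<omega>''\<in>Omega T t.
          IntD \<delta> (D (concat T t (?c \<omega>) \<omega>'') u) \<subseteq> IntD e (D (concat T t \<omega>' \<omega>'') u))"
      by blast
    with P \<delta> show ?thesis by blast
  qed
  obtain Pf \<delta>f ef where PF: "\<And>\<omega>. \<omega> \<in> ?X \<Longrightarrow> Pf \<omega> \<in> Pset T D t (?c \<omega>) \<and>
      Vt T D \<xi> t (?c \<omega>) \<le> integral\<^sup>L (Pf \<omega>) (\<lambda>\<omega>'. \<xi> (concat T t (?c \<omega>) \<omega>')) + \<epsilon> \<and>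
      \<delta>f \<omega> > 0 \<and> Pgood T D t (?c \<omega>) (Pf \<omega>) (\<delta>f \<omega>) \<and> ef \<omega> > 0 \<and>
      (\<forall>\<omega>'\<in>Omega T 0. (\<forall>u\<in>{0..t}. norm (?c \<omega> u - \<omega>' u) \<le> ef \<omega>) \<longrightarrow>
        (\<forall>u\<in>{t..T}. \<forall>\<omega>''\<in>Omega T t.
          IntD (\<delta>f \<omega>) (D (concat T t (?c \<omega>) \<omega>'') u) \<subseteq> IntD (ef \<omega>) (D (concat T t \<omega>' \<omega>'') u)))"
    using ex by metis
  have PfS: "Pf \<omega> \<in> PbarS T t" if "\<omega> \<in> ?X" for \<omega> using PF[OF that] by (simp add: Pset_def)
  have key: "Pgood T D t (?c \<omega>0) (Pf \<omega>) (ef \<omega>)"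
    if \<omega>: "\<omega> \<in> ?X" and \<omega>0: "\<omega>0 \<in> ?X" and cl: "\<forall>u\<in>{s..t}. norm (\<omega>0 u - \<omega> u) \<le> ef \<omega>" for \<omega> \<omega>0
  proof (rule pgood_transfer[OF PfS[OF \<omega>]])
    show "Pgood T D t (?c \<omega>) (Pf \<omega>) (\<delta>f \<omega>)" using PF[OF \<omega>] by blast
    have "\<forall>u\<in>{0..t}. norm (?c \<omega> u - ?c \<omega>0 u) \<le> ef \<omega>"
    proof
      fix u assume u: "u \<in> {0..t}"
      show "norm (?c \<omega> u - ?c \<omega>0 u) \<le> ef \<omega>"
      proof (cases "u < s")
        case True then show ?thesis using PF[OF \<omega>] by (simp add: concat_def)
      next
        case False then show ?thesis using u cl assms(8)
          by (auto simp: concat_def norm_minus_commute)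
      qed
    qed
    then show "\<forall>u\<in>{t..T}. \<forall>w''\<in>Omega T t. IntD (\<delta>f \<omega>) (D (concat T t (?c \<omega>) w'') u)
                 \<subseteq> IntD (ef \<omega>) (D (concat T t (?c \<omega>0) w'') u)"
      using PF[OF \<omega>] cin[OF \<omega>0] by blast
  qed
  obtain Q :: "'d path set" where cQ: "countable Q" and
    dQ: "\<And>\<omega> e. continuous_on {s..t} \<omega> \<Longrightarrow> e > 0 \<Longrightarrow> \<exists>q\<in>Q. \<forall>u\<in>{s..t}. norm (\<omega> u - q u) < e"
    using sep_Q[OF assms(7)] by blast
  define r where "r \<omega> = min \<epsilon> (ef \<omega>)" for \<omega>
  have rpos: "r \<omega> > 0" if "\<omega> \<in> ?X" for \<omega> using PF[OF that] assms(11) by (simp add: r_def)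
  define R where "R p \<omega> \<longleftrightarrow> \<omega> \<in> ?X \<and> (\<forall>u\<in>S0 s t. norm (\<omega> u - fst p u) \<le> 1/(real (snd p)+1))
      \<and> 2/(real (snd p)+1) \<le> r \<omega>" for p :: "'d path \<times> nat" and \<omega>
  define A where "A = {p \<in> Q \<times> UNIV. \<exists>\<omega>. R p \<omega>}"
  define wf where "wf p = (SOME \<omega>. R p \<omega>)" for p
  have wf: "R p (wf p)" if "p \<in> A" for p
    unfolding wf_def by (rule someI_ex[of "R p"]) (use that in \<open>auto simp: A_def\<close>)
  define B where "B p = {\<omega>\<in>?X. \<forall>u\<in>S0 s t. norm (\<omega> u - fst p u) \<le> 1/(real (snd p)+1)}" for p :: "'d path \<times> nat"
  have Bmeas: "B p \<in> Ft T s t" for p unfolding B_def by (rule meas_ball[OF assms(7)])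
  have contX: "continuous_on {s..t} \<omega>" if "\<omega> \<in> ?X" for \<omega>
    using that assms(8) by (auto simp: Omega_def intro: continuous_on_subset)
  have Bclose: "\<forall>u\<in>{s..t}. norm (\<omega>0 u - wf p u) \<le> r (wf p)" if p: "p \<in> A" and \<omega>0: "\<omega>0 \<in> B p" for p \<omega>0
  proof
    fix u assume u: "u \<in> {s..t}"
    have wX: "wf p \<in> ?X" using wf[OF p] by (simp add: R_def)
    have "norm (\<omega>0 v - wf p v) \<le> r (wf p)" if v: "v \<in> S0 s t" for v
    proof -
      have "norm (\<omega>0 v - wf p v) \<le> norm (\<omega>0 v - fst p v) + norm (wf p v - fst p v)"
        using norm_triangle_ineq4[of "\<omega>0 v - fst p v" "wf p v - fst p v"] by simp
      also have "\<dots> \<le> 1/(real (snd p)+1) + 1/(real (snd p)+1)"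
        using \<omega>0 wf[OF p] v by (intro add_mono) (auto simp: B_def R_def)
      also have "\<dots> = 2/(real (snd p)+1)" by simp
      also have "\<dots> \<le> r (wf p)" using wf[OF p] by (simp add: R_def)
      finally show ?thesis .
    qed
    moreover have "continuous_on {s..t} (\<lambda>v. \<omega>0 v - wf p v)"
      using contX[OF wX] contX \<omega>0 by (intro continuous_intros) (auto simp: B_def)
    ultimately show "norm (\<omega>0 u - wf p u) \<le> r (wf p)" using ext_S0[of s t "\<lambda>v. \<omega>0 v - wf p v"] u by blast
  qed
  have S0sub: "S0 s t \<subseteq> {s..t}" using assms(7) by (auto simp: S0_def)
  have cover: "\<exists>p\<in>A. \<omega> \<in> B p" if \<omega>: "\<omega> \<in> ?X" for \<omega>
  proof -
    obtain m :: nat where m: "2 / r \<omega> < real m" using reals_Archimedean2 by blast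
    have "2 < real m * r \<omega>" using m rpos[OF \<omega>] by (simp add: field_simps)
    then have "2 \<le> (real m + 1) * r \<omega>" using rpos[OF \<omega>] by (simp add: algebra_simps)
    then have m2: "2/(real m+1) \<le> r \<omega>" by (simp add: field_simps)
    obtain q where q: "q \<in> Q" "\<forall>u\<in>{s..t}. norm (\<omega> u - q u) < 1/(real m+1)"
      using dQ[OF contX[OF \<omega>], of "1/(real m+1)"] by auto
    have "R (q, m) \<omega>" using q \<omega> m2 S0sub unfolding R_def by (auto intro: less_imp_le)
    then have "(q, m) \<in> A" using q by (auto simp: A_def)
    moreover have "\<omega> \<in> B (q, m)" using q \<omega> S0sub unfolding B_def by (auto intro: less_imp_le)
    ultimately show ?thesis by blast
  qed
  have zX: "(\<lambda>_. 0) \<in> ?X" by (simp add: Omega_def)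
  have Ane: "A \<noteq> {}" using cover[OF zX] by blast
  have cA: "countable A"
    by (rule countable_subset[of _ "Q \<times> (UNIV :: nat set)"]) (auto simp: A_def intro: cQ)
  define g where "g = from_nat_into A"
  have gA: "g i \<in> A" for i using from_nat_into[OF Ane] by (simp add: g_def)
  have rg: "range g = A" using Ane cA by (simp add: g_def)
  define E where "E = disjointed (\<lambda>i. B (g i))"
  have EB: "E i \<subseteq> B (g i)" for i unfolding E_def by (rule disjointed_subset)
  interpret sa: sigma_algebra "Omega T s" "Ft T s t :: 'd path set set"
    unfolding Ft_def by (rule sigma_algebra_sigma_sets) auto
  have Emeas: "E i \<in> Ft T s t" for i
  proof -
    have "range (\<lambda>i. B (g i)) \<subseteq> Ft T s t" by (rule image_subsetI) (rule Bmeas)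
    then have "range E \<subseteq> Ft T s t" unfolding E_def by (rule sa.range_disjointed_sets)
    then show ?thesis by auto
  qed
  have Eun: "(\<Union>i. E i) = ?X"
  proof -
    have "(\<Union>i. E i) = (\<Union>i. B (g i))" unfolding E_def by (rule UN_disjointed_eq)
    also have "\<dots> = ?X"
    proof
      show "(\<Union>i. B (g i)) \<subseteq> ?X" by (auto simp: B_def)
      show "?X \<subseteq> (\<Union>i. B (g i))"
      proof
        fix \<omega> assume "\<omega> \<in> ?X"
        then obtain p where "p \<in> A" "\<omega> \<in> B p" using cover by blast
        then obtain i where "g i = p" using rg by auto
        with \<open>\<omega> \<in> B p\<close> show "\<omega> \<in> (\<Union>i. B (g i))" by auto
      qed
    qed
    finally show ?thesis .
  qed
  define what where "what i = wf (g i)" for i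
  have whX: "what i \<in> ?X" for i using wf[OF gA] by (simp add: what_def R_def)
  show ?thesis
  proof (intro exI[of _ what] exI[of _ E] exI[of _ "\<lambda>i. Pf (what i)"] conjI allI ballI)
    show "what i \<in> ?X" for i by (rule whX)
    show "E i \<in> Ft T s t" for i by (rule Emeas)
    show "disjoint_family E" unfolding E_def by (rule disjoint_family_disjointed)
    show "(\<Union>i. E i) = ?X" by (rule Eun)
    show "Pf (what i) \<in> PbarS T t" for i by (rule PfS[OF whX])
    show "norm (\<omega> u - what i u) \<le> \<epsilon>" if "\<omega> \<in> E i" "u \<in> {s..t}" for i \<omega> u
    proof -
      have "norm (\<omega> u - what i u) \<le> r (what i)"
        using Bclose[OF gA, of \<omega> i] that EB unfolding what_def by blast
      then show ?thesis by (simp add: r_def)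
    qed
    have pg: "Pgood T D t (?c \<omega>) (Pf (what i)) (ef (what i))" if "\<omega> \<in> E i" for i \<omega>
    proof (rule key[OF whX])
      show "\<omega> \<in> ?X" using that EB by (auto simp: B_def)
      have "\<forall>u\<in>{s..t}. norm (\<omega> u - what i u) \<le> r (what i)"
        using Bclose[OF gA, of \<omega> i] that EB unfolding what_def by blast
      then show "\<forall>u\<in>{s..t}. norm (\<omega> u - what i u) \<le> ef (what i)"
        by (auto simp: r_def intro: order_trans)
    qed
    show "Pf (what i) \<in> Pset T D t (?c \<omega>)" if "\<omega> \<in> E i" for i \<omega>
      using pg[OF that] PfS[OF whX] PF[OF whX] unfolding Pset_def by blast
    show "\<exists>c>0. \<forall>\<omega>\<in>E i. c \<le> deg T D t (?c \<omega>) (Pf (what i))" for i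
    proof (intro exI[of _ "min (ef (what i)/2) 1"] conjI ballI)
      show "min (ef (what i)/2) 1 > 0" using PF[OF whX] by simp
      show "min (ef (what i)/2) 1 \<le> deg T D t (?c \<omega>) (Pf (what i))" if "\<omega> \<in> E i" for \<omega>
        using deg_lb[OF _ pg[OF that]] PF[OF whX] by blast
    qed
    show "Vt T D \<xi> t (?c (what i))
            \<le> integral\<^sup>L (Pf (what i)) (\<lambda>\<omega>'. \<xi> (concat T t (?c (what i)) \<omega>')) + \<epsilon>" for i
      using PF[OF whX] by blast
  qed
qed

end
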